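(* Let $C_{12},C_{13},C_{23}$ be compatible bivariate copulas and let $C_L,C_U$ be defined as below. Define \[ F_U(u_1,u_2,u_3)=\min\{C_{12}(u_1,u_2),\,C_{13}(u_1,u_3),\,C_{23}(u_2,u_3),\,1-u_1-u_2-u_3+C_{12}(u_1,u_2)+C_{13}(u_1,u_3)+C_{23}(u_2,u_3)\}, \] \[ F_L(u_1,u_2,u_3)=\max\{0,\,C_{12}(u_1,u_2)+C_{13}(u_1,u_3)-u_1,\,C_{12}(u_1,u_2)+C_{23}(u_2,u_3)-u_2,\,C_{13}(u_1,u_3)+C_{23}(u_2,u_3)-u_3\}. \] Then for every $\mathbf u\in[0,1]^3$, $C_L(\mathbf u)\ge F_L(\mathbf u)$ and $C_U(\mathbf u)\le F_U(\mathbf u)$.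
   Context: A bivariate copula is a distribution function on $[0,1]^2$ with uniform $[0,1]$ marginals. Bivariate copulas $C_{12},C_{13},C_{23}$ are compatible if there is a distribution function $\widetilde C$ on $[0,1]^3$ with uniform marginals such that $\widetilde C(u_1,u_2,1)=C_{12}(u_1,u_2)$, $\widetilde C(u_1,1,u_3)=C_{13}(u_1,u_3)$, $\widetilde C(1,u_2,u_3)=C_{23}(u_2,u_3)$. Let $C_{ji}(u,v):=C_{ij}(v,u)$ for $i<j$, $W_2(u,v)=\max\{u+v-1,0\}$, $M_2(u,v)=\min\{u,v\}$, and for bivariate copulas $A,B,C$: $(A\ast_{C} B)(x,z)=\int_{0}^{1} C(\tfrac{\partial}{\partial t} A(x,t),\tfrac{\partial}{\partial t} B(t,z))\, dt$, $(A\star_{C} B)(x,y,z)=\int_{0}^{y} C(\tfrac{\partial}{\partial t} A(x,t),\tfrac{\partial}{\partial t} B(t,z))\, dt$ (partial derivatives a.e.). With $\mathcal P=\{(1,2,3),(1,3,2),(2,1,3)\}$, $C_L(u_1,u_2,u_3)=\max_{(i,j,k)\in\mathcal P}\max\{(C_{ij}\star_{W_2}C_{jk})(u_i,u_j,u_k),\ (C_{ij}\star_{M_2}C_{jk})(u_i,u_j,u_k)+C_{ik}(u_i,u_k)-(C_{ij}\ast_{M_2}C_{jk})(u_i,u_k)\}$ and $C_U(u_1,u_2,u_3)=\min_{(i,j,k)\in\mathcal P}\min\{(C_{ij}\star_{M_2}C_{jk})(u_i,u_j,u_k),\ (C_{ij}\star_{W_2}C_{jk})(u_i,u_j,u_k)+C_{ik}(u_i,u_k)-(C_{ij}\ast_{W_2}C_{jk})(u_i,u_k)\}$.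 *)

theory Defs
  imports "HOL-Analysis.Analysis"
begin

text \<open>Bivariate copula: a distribution function on the unit square with uniform
  marginals (grounded, uniform margins, 2-increasing on the unit square).
  Values outside the unit square are irrelevant.\<close>
definition copula2 :: "(real \<Rightarrow> real \<Rightarrow> real) \<Rightarrow> bool" where
  "copula2 C \<longleftrightarrow>
     (\<forall>u\<in>{0..1}. C u 0 = 0 \<and> C 0 u = 0 \<and> C u 1 = u \<and> C 1 u = u) \<and>
     (\<forall>u1\<in>{0..1}. \<forall>u2\<in>{0..1}. \<forall>v1\<in>{0..1}. \<forall>v2\<in>{0..1}.
        u1 \<le> u2 \<longrightarrow> v1 \<le> v2 \<longrightarrow> C u2 v2 - C u2 v1 - C u1 v2 + C u1 v1 \<ge> 0)"

definition copula3 :: "(real \<Rightarrow> real \<Rightarrow> real \<Rightarrow> real) \<Rightarrow> bool" where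
  "copula3 C \<longleftrightarrow>
     (\<forall>u\<in>{0..1}. \<forall>v\<in>{0..1}. C 0 u v = 0 \<and> C u 0 v = 0 \<and> C u v 0 = 0) \<and>
     (\<forall>u\<in>{0..1}. C u 1 1 = u \<and> C 1 u 1 = u \<and> C 1 1 u = u) \<and>
     (\<forall>a1\<in>{0..1}. \<forall>b1\<in>{0..1}. \<forall>a2\<in>{0..1}. \<forall>b2\<in>{0..1}. \<forall>a3\<in>{0..1}. \<forall>b3\<in>{0..1}.
        a1 \<le> b1 \<longrightarrow> a2 \<le> b2 \<longrightarrow> a3 \<le> b3 \<longrightarrow>
        C b1 b2 b3 - C a1 b2 b3 - C b1 a2 b3 - C b1 b2 a3
          + C a1 a2 b3 + C a1 b2 a3 + C b1 a2 a3 - C a1 a2 a3 \<ge> 0)"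

definition compatible ::
  "(real \<Rightarrow> real \<Rightarrow> real) \<Rightarrow> (real \<Rightarrow> real \<Rightarrow> real) \<Rightarrow> (real \<Rightarrow> real \<Rightarrow> real) \<Rightarrow> bool" where
  "compatible C12 C13 C23 \<longleftrightarrow>
     copula2 C12 \<and> copula2 C13 \<and> copula2 C23 \<and>
     (\<exists>C. copula3 C \<and>
        (\<forall>u\<in>{0..1}. \<forall>v\<in>{0..1}. C u v 1 = C12 u v \<and> C u 1 v = C13 u v \<and> C 1 u v = C23 u v))"

definition W2 :: "real \<Rightarrow> real \<Rightarrow> real" where
  "W2 u v = max (u + v - 1) 0"

definition M2 :: "real \<Rightarrow> real \<Rightarrow> real" where
  "M2 u v = min u v"

text \<open>\<open>(A \<star>_C B)(x,y,z) = \<integral>_0^y C(\<partial>_t A(x,t), \<partial>_t B(t,z)) dt\<close>; the partial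
  derivatives exist a.e., and values on null sets do not affect the
  (Henstock-Kurzweil = Lebesgue) integral.\<close>
definition star3 ::
  "(real \<Rightarrow> real \<Rightarrow> real) \<Rightarrow> (real \<Rightarrow> real \<Rightarrow> real) \<Rightarrow> (real \<Rightarrow> real \<Rightarrow> real)
     \<Rightarrow> real \<Rightarrow> real \<Rightarrow> real \<Rightarrow> real" where
  "star3 C A B x y z = integral {0..y} (\<lambda>t. C (deriv (\<lambda>s. A x s) t) (deriv (\<lambda>s. B s z) t))"

definition ast2 ::
  "(real \<Rightarrow> real \<Rightarrow> real) \<Rightarrow> (real \<Rightarrow> real \<Rightarrow> real) \<Rightarrow> (real \<Rightarrow> real \<Rightarrow> real)
     \<Rightarrow> real \<Rightarrow> real \<Rightarrow> real" where
  "ast2 C A B x z = integral {0..1} (\<lambda>t. C (deriv (\<lambda>s. A x s) t) (deriv (\<lambda>s. B s z) t))"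

definition transp2 :: "(real \<Rightarrow> real \<Rightarrow> real) \<Rightarrow> real \<Rightarrow> real \<Rightarrow> real" where
  "transp2 C u v = C v u"

definition termL ::
  "(real \<Rightarrow> real \<Rightarrow> real) \<Rightarrow> (real \<Rightarrow> real \<Rightarrow> real) \<Rightarrow> (real \<Rightarrow> real \<Rightarrow> real)
     \<Rightarrow> real \<Rightarrow> real \<Rightarrow> real \<Rightarrow> real" where
  "termL Cij Cjk Cik ui uj uk =
     max (star3 W2 Cij Cjk ui uj uk)
         (star3 M2 Cij Cjk ui uj uk + Cik ui uk - ast2 M2 Cij Cjk ui uk)"

definition termU ::
  "(real \<Rightarrow> real \<Rightarrow> real) \<Rightarrow> (real \<Rightarrow> real \<Rightarrow> real) \<Rightarrow> (real \<Rightarrow> real \<Rightarrow> real)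
     \<Rightarrow> real \<Rightarrow> real \<Rightarrow> real \<Rightarrow> real" where
  "termU Cij Cjk Cik ui uj uk =
     min (star3 M2 Cij Cjk ui uj uk)
         (star3 W2 Cij Cjk ui uj uk + Cik ui uk - ast2 W2 Cij Cjk ui uk)"

text \<open>P = {(1,2,3),(1,3,2),(2,1,3)}.\<close>
definition CL ::
  "(real \<Rightarrow> real \<Rightarrow> real) \<Rightarrow> (real \<Rightarrow> real \<Rightarrow> real) \<Rightarrow> (real \<Rightarrow> real \<Rightarrow> real)
     \<Rightarrow> real \<Rightarrow> real \<Rightarrow> real \<Rightarrow> real" where
  "CL C12 C13 C23 u1 u2 u3 =
     max (termL C12 C23 C13 u1 u2 u3)
      (max (termL C13 (transp2 C23) C12 u1 u3 u2)
           (termL (transp2 C12) C13 C23 u2 u1 u3))"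

definition CU ::
  "(real \<Rightarrow> real \<Rightarrow> real) \<Rightarrow> (real \<Rightarrow> real \<Rightarrow> real) \<Rightarrow> (real \<Rightarrow> real \<Rightarrow> real)
     \<Rightarrow> real \<Rightarrow> real \<Rightarrow> real \<Rightarrow> real" where
  "CU C12 C13 C23 u1 u2 u3 =
     min (termU C12 C23 C13 u1 u2 u3)
      (min (termU C13 (transp2 C23) C12 u1 u3 u2)
           (termU (transp2 C12) C13 C23 u2 u1 u3))"

definition FU ::
  "(real \<Rightarrow> real \<Rightarrow> real) \<Rightarrow> (real \<Rightarrow> real \<Rightarrow> real) \<Rightarrow> (real \<Rightarrow> real \<Rightarrow> real)
     \<Rightarrow> real \<Rightarrow> real \<Rightarrow> real \<Rightarrow> real" where
  "FU C12 C13 C23 u1 u2 u3 =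
     min (C12 u1 u2) (min (C13 u1 u3) (min (C23 u2 u3)
       (1 - u1 - u2 - u3 + C12 u1 u2 + C13 u1 u3 + C23 u2 u3)))"

definition FL ::
  "(real \<Rightarrow> real \<Rightarrow> real) \<Rightarrow> (real \<Rightarrow> real \<Rightarrow> real) \<Rightarrow> (real \<Rightarrow> real \<Rightarrow> real)
     \<Rightarrow> real \<Rightarrow> real \<Rightarrow> real \<Rightarrow> real" where
  "FL C12 C13 C23 u1 u2 u3 =
     max 0 (max (C12 u1 u2 + C13 u1 u3 - u1) (max (C12 u1 u2 + C23 u2 u3 - u2)
       (C13 u1 u3 + C23 u2 u3 - u3)))"

end

theory Submission
  imports Defs
begin

lemma vitali_step:
  fixes F :: "real \<Rightarrow> real" and p q a b :: real and E U :: "real set"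
  assumes mono: "\<And>x y. x \<le> y \<Longrightarrow> F x \<le> F y" and cont: "continuous_on UNIV F"
    and pq: "0 < p" "p < q"
    and E: "\<And>x. x \<in> E \<Longrightarrow> frequently (\<lambda>h. (F (x+h) - F x)/h < p) (at_left 0)
                  \<and> frequently (\<lambda>h. (F (x+h) - F x)/h > q) (at_right 0)"
    and U: "open U" "E \<subseteq> U" "U \<subseteq> {a<..<b}"
  obtains W where "W \<in> lmeasurable" "E \<subseteq> W" "q * measure lebesgue W \<le> p * measure lebesgue U"
proof -
  define K1 where "K1 = {(c,r). 0<r \<and> cball c r \<subseteq> U \<and> F(c+r) - F(c-r) \<le> p*(2*r)}"
  have cov1: "\<exists>i. i\<in>K1 \<and> x \<in> cball (fst i) (snd i) \<and> snd i < d" if x: "x\<in>E" "0<d" for x d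
  proof -
    obtain e where e: "e>0" "ball x e \<subseteq> U" using U x by (meson openE subsetD)
    have ev: "eventually (\<lambda>h. h \<in> {-min e (2*d)<..<0}) (at_left (0::real))"
      using e x by (intro eventually_at_left_real) auto
    have "frequently (\<lambda>h. h \<in> {-min e (2*d)<..<0} \<and> (F (x+h) - F x)/h < p) (at_left 0)"
      using frequently_eventually_conj[OF conjunct1[OF E[OF x(1)]] ev] .
    then obtain h where h: "(F (x+h) - F x)/h < p" "h \<in> {-min e (2*d)<..<0}"
      using frequently_ex by blast
    define k where "k = -h"
    have k: "0 < k" "k < e" "k < 2*d" using h by (auto simp: k_def)
    have "F (x-k) - F x > p * (-k)" using h(1) k by (auto simp: k_def field_simps)
    then have inc: "F x - F (x-k) \<le> p * k" by simp
    have "cball (x - k/2) (k/2) \<subseteq> U"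
      using e k by (auto simp: cball_eq_atLeastAtMost ball_eq_greaterThanLessThan)
    then show ?thesis using k inc
      by (intro exI[of _ "(x - k/2, k/2)"]) (auto simp: K1_def cball_eq_atLeastAtMost)
  qed
  have K1pos: "\<And>i. i \<in> K1 \<Longrightarrow> 0 < snd i" by (auto simp: K1_def)
  obtain C1 where C1: "countable C1" "C1 \<subseteq> K1"
     "pairwise (\<lambda>i j. disjnt (cball (fst i) (snd i)) (cball (fst j) (snd j))) C1"
     "negligible(E - (\<Union>i \<in> C1. cball (fst i) (snd i)))"
    using Vitali_covering_theorem_cballs[where K=K1 and r=snd and S=E and a=fst, OF K1pos cov1] by blast
  define V where "V = (\<Union>i\<in>C1. ball (fst i) (snd i))"
  have "open V" by (auto simp: V_def)
  have VU: "V \<subseteq> U" using C1(2) by (force simp: V_def K1_def mem_ball mem_cball)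
  define K2 where "K2 = {(c,r). 0<r \<and> cball c r \<subseteq> V \<and> F(c+r) - F(c-r) \<ge> q*(2*r)}"
  have cov2: "\<exists>i. i\<in>K2 \<and> x \<in> cball (fst i) (snd i) \<and> snd i < d" if x: "x\<in>E \<inter> V" "0<d" for x d
  proof -
    obtain e where e: "e>0" "ball x e \<subseteq> V" using \<open>open V\<close> x by (meson openE IntD2)
    have ev: "eventually (\<lambda>h. h \<in> {0<..<min e (2*d)}) (at_right (0::real))"
      using e x by (intro eventually_at_right_real) auto
    have "frequently (\<lambda>h. h \<in> {0<..<min e (2*d)} \<and> (F (x+h) - F x)/h > q) (at_right 0)"
      using frequently_eventually_conj[OF conjunct2[OF E] ev] x by auto
    then obtain h where h: "(F (x+h) - F x)/h > q" "h \<in> {0<..<min e (2*d)}"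
      using frequently_ex by blast
    have inc: "F (x+h) - F x \<ge> q * h" using h by (auto simp: field_simps)
    have "cball (x + h/2) (h/2) \<subseteq> V"
      using e h by (auto simp: cball_eq_atLeastAtMost ball_eq_greaterThanLessThan)
    then show ?thesis using h inc
      by (intro exI[of _ "(x + h/2, h/2)"]) (auto simp: K2_def cball_eq_atLeastAtMost add.commute)
  qed
  have K2pos: "\<And>i. i \<in> K2 \<Longrightarrow> 0 < snd i" by (auto simp: K2_def)
  obtain C2 where C2: "countable C2" "C2 \<subseteq> K2"
     "pairwise (\<lambda>i j. disjnt (cball (fst i) (snd i)) (cball (fst j) (snd j))) C2"
     "negligible((E \<inter> V) - (\<Union>i \<in> C2. cball (fst i) (snd i)))"
    using Vitali_covering_theorem_cballs[where K=K2 and r=snd and S="E \<inter> V" and a=fst, OF K2pos cov2] by blast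
  define W2 where "W2 = (\<Union>i\<in>C2. cball (fst i) (snd i))"
  define N where "N = (E - (\<Union>i \<in> C1. cball (fst i) (snd i))) \<union> (\<Union>i\<in>C1. sphere (fst i) (snd i)) \<union> ((E \<inter> V) - W2)"
  have negN: "negligible N"
    unfolding N_def using C1 C2 W2_def
    by (intro negligible_Un negligible_countable_Union) (auto intro: negligible_sphere)
  have EWN: "E \<subseteq> W2 \<union> N"
  proof
    fix x assume x: "x \<in> E"
    show "x \<in> W2 \<union> N"
    proof (cases "x \<in> V")
      case True then show ?thesis using x by (auto simp: N_def)
    next
      case False
      then show ?thesis using x unfolding N_def V_def by (force simp: mem_ball mem_cball dist_commute)
    qed
  qed
  have sets_ball: "\<And>i. ball (fst i) (snd i) \<in> sets borel" "\<And>i. cball (fst i) (snd i) \<in> sets borel" by auto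
  have W2b: "W2 \<in> sets borel" unfolding W2_def using C2(1) by (intro sets.countable_UN'') auto
  have Vb: "V \<in> sets borel" using \<open>open V\<close> by auto
  have Ub: "U \<in> sets borel" using U by auto
  have W2V: "W2 \<subseteq> V" using C2(2) by (force simp: W2_def K2_def)
  define \<mu> where "\<mu> = interval_measure F"
  have rc: "\<And>a. continuous (at_right a) F"
    using cont by (simp add: continuous_on_eq_continuous_within continuous_at_imp_continuous_at_within)
  have muIoc: "emeasure \<mu> {c<..d} = ennreal (F d - F c)" if "c \<le> d" for c d
    unfolding \<mu>_def using emeasure_interval_measure_Ioc[OF that mono rc] .
  have dj1: "disjoint_family_on (\<lambda>i. ball (fst i) (snd i)) C1"
    using C1(3) unfolding disjoint_family_on_def pairwise_def disjnt_def by (meson ball_subset_cball disjoint_iff subsetD)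
  have dj2: "disjoint_family_on (\<lambda>i. cball (fst i) (snd i)) C2"
    using C2(3) unfolding disjoint_family_on_def pairwise_def disjnt_def by blast
  have "ennreal q * emeasure lborel W2 = ennreal q * (\<integral>\<^sup>+ i. emeasure lborel (cball (fst i) (snd i)) \<partial>count_space C2)"
    unfolding W2_def by (subst emeasure_UN_countable[OF _ C2(1) dj2]) auto
  also have "\<dots> = (\<integral>\<^sup>+ i. ennreal q * emeasure lborel (cball (fst i) (snd i)) \<partial>count_space C2)"
    by (rule nn_integral_cmult[symmetric]) auto
  also have "\<dots> \<le> (\<integral>\<^sup>+ i. emeasure \<mu> (cball (fst i) (snd i)) \<partial>count_space C2)"
  proof (rule nn_integral_mono)
    fix i assume "i \<in> space (count_space C2)"
    then have i: "i \<in> K2" using C2(2) by auto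
    obtain c r where cr: "i = (c,r)" by (cases i)
    have r: "0 < r" "F(c+r) - F(c-r) \<ge> q*(2*r)" using i cr by (auto simp: K2_def)
    have "ennreal q * emeasure lborel (cball (fst i) (snd i)) = ennreal (q * (2*r))"
      using r pq by (simp add: cr cball_eq_atLeastAtMost ennreal_mult)
    also have "\<dots> \<le> ennreal (F(c+r) - F(c-r))" using r by (simp add: ennreal_leI)
    also have "\<dots> = emeasure \<mu> {c-r<..c+r}" using r by (simp add: muIoc)
    also have "\<dots> \<le> emeasure \<mu> (cball (fst i) (snd i))"
      by (rule emeasure_mono) (auto simp: cr cball_eq_atLeastAtMost \<mu>_def)
    finally show "ennreal q * emeasure lborel (cball (fst i) (snd i)) \<le> emeasure \<mu> (cball (fst i) (snd i))" .
  qed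
  also have "\<dots> = emeasure \<mu> W2"
    unfolding W2_def by (subst emeasure_UN_countable[OF _ C2(1) dj2]) (auto simp: \<mu>_def)
  also have "\<dots> \<le> emeasure \<mu> V"
    by (rule emeasure_mono[OF W2V]) (use Vb in \<open>auto simp: \<mu>_def\<close>)
  also have "\<dots> = (\<integral>\<^sup>+ i. emeasure \<mu> (ball (fst i) (snd i)) \<partial>count_space C1)"
    unfolding V_def by (subst emeasure_UN_countable[OF _ C1(1) dj1]) (auto simp: \<mu>_def)
  also have "\<dots> \<le> (\<integral>\<^sup>+ i. ennreal p * emeasure lborel (ball (fst i) (snd i)) \<partial>count_space C1)"
  proof (rule nn_integral_mono)
    fix i assume "i \<in> space (count_space C1)"
    then have i: "i \<in> K1" using C1(2) by auto
    obtain c r where cr: "i = (c,r)" by (cases i)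
    have r: "0 < r" "F(c+r) - F(c-r) \<le> p*(2*r)" using i cr by (auto simp: K1_def)
    have "emeasure \<mu> (ball (fst i) (snd i)) \<le> emeasure \<mu> {c-r<..c+r}"
      by (rule emeasure_mono) (auto simp: cr ball_eq_greaterThanLessThan \<mu>_def)
    also have "\<dots> = ennreal (F(c+r) - F(c-r))" using r by (simp add: muIoc)
    also have "\<dots> \<le> ennreal (p * (2*r))" using r by (simp add: ennreal_leI)
    also have "\<dots> = ennreal p * emeasure lborel (ball (fst i) (snd i))"
      using r pq by (simp add: cr ball_eq_greaterThanLessThan ennreal_mult)
    finally show "emeasure \<mu> (ball (fst i) (snd i)) \<le> ennreal p * emeasure lborel (ball (fst i) (snd i))" .
  qed
  also have "\<dots> = ennreal p * (\<integral>\<^sup>+ i. emeasure lborel (ball (fst i) (snd i)) \<partial>count_space C1)"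
    by (rule nn_integral_cmult) auto
  also have "\<dots> = ennreal p * emeasure lborel V"
    unfolding V_def by (subst emeasure_UN_countable[OF _ C1(1) dj1]) auto
  also have "\<dots> \<le> ennreal p * emeasure lborel U"
    using Ub by (intro mult_left_mono emeasure_mono VU) auto
  finally have ineq: "ennreal q * emeasure lborel W2 \<le> ennreal p * emeasure lborel U" .
  have Uab: "emeasure lborel U \<le> emeasure lborel {a<..<b}" by (rule emeasure_mono[OF U(3)]) auto
  then have Ufin: "emeasure lborel U < \<infinity>"
  proof -
    have "emeasure lborel {a<..<b} < \<infinity>" by (cases "a \<le> b") auto
    then show ?thesis using Uab by (simp add: le_less_trans)
  qed
  have W2fin: "emeasure lborel W2 < \<infinity>"
    using emeasure_mono[of W2 U lborel] W2V VU Ub Ufin by (metis dual_order.trans le_less_trans sets_lborel)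
  have "ennreal (q * measure lborel W2) \<le> ennreal (p * measure lborel U)"
    using ineq Ufin W2fin pq by (simp add: emeasure_eq_ennreal_measure ennreal_mult)
  then have ineq2: "q * measure lborel W2 \<le> p * measure lborel U"
    using pq by (subst (asm) ennreal_le_iff) auto
  show ?thesis
  proof
    show "E \<subseteq> W2 \<union> N" by (rule EWN)
    have W2leb: "W2 \<in> lmeasurable"
      using W2b W2fin by (auto simp: fmeasurable_def emeasure_completion)
    then show "W2 \<union> N \<in> lmeasurable" using negN by (simp add: negligible_imp_measurable fmeasurable.Un)
    have "measure lebesgue (W2 \<union> N) = measure lebesgue W2"
      using W2leb negN by (simp add: measure_Un_null_set negligible_iff_null_sets fmeasurable_def)
    also have "\<dots> = measure lborel W2" using W2b by (simp add: measure_completion)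
    finally have 1: "measure lebesgue (W2 \<union> N) = measure lborel W2" .
    have 2: "measure lebesgue U = measure lborel U" using Ub by (simp add: measure_completion)
    show "q * measure lebesgue (W2 \<union> N) \<le> p * measure lebesgue U" using ineq2 1 2 by simp
  qed
qed

lemma negl_local:
  fixes F :: "real \<Rightarrow> real" and p q a b :: real and E :: "real set"
  assumes mono: "\<And>x y. x \<le> y \<Longrightarrow> F x \<le> F y" and cont: "continuous_on UNIV F"
    and pq: "0 < p" "p < q"
    and E: "\<And>x. x \<in> E \<Longrightarrow> frequently (\<lambda>h. (F (x+h) - F x)/h < p) (at_left 0)
                  \<and> frequently (\<lambda>h. (F (x+h) - F x)/h > q) (at_right 0)"
    and Eab: "E \<subseteq> {a<..<b}"
  shows "negligible E"
proof -
  define \<U> where "\<U> = {U. open U \<and> E \<subseteq> U \<and> U \<subseteq> {a<..<b}}"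
  define s where "s = Inf (measure lebesgue ` \<U>)"
  have ne: "measure lebesgue ` \<U> \<noteq> {}" using Eab by (auto simp: \<U>_def intro!: exI[of _ "{a<..<b}"])
  have bdd: "bdd_below (measure lebesgue ` \<U>)" by (rule bdd_belowI[of _ 0]) auto
  have s0: "0 \<le> s" unfolding s_def using ne by (intro cInf_greatest) auto
  have Ulm: "U \<in> lmeasurable" if "U \<in> \<U>" for U
  proof -
    have "bounded {a<..<b}" by (rule bounded_subset[of "{a..b}"]) auto
    then show ?thesis using that unfolding \<U>_def by (blast intro: lmeasurable_open bounded_subset)
  qed
  have key: "q * s \<le> p * (s + \<epsilon>)" if eps: "\<epsilon> > 0" for \<epsilon>
  proof -
    obtain m where "m \<in> measure lebesgue ` \<U>" "m < s + \<epsilon>"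
      using cInf_lessD[OF ne, of "s+\<epsilon>"] eps by (auto simp: s_def)
    then obtain U where U: "U \<in> \<U>" "measure lebesgue U < s + \<epsilon>" by auto
    obtain W where W: "W \<in> lmeasurable" "E \<subseteq> W" "q * measure lebesgue W \<le> p * measure lebesgue U"
      using vitali_step[where U=U and a=a and b=b, OF mono cont pq E] U(1) unfolding \<U>_def by blast
    have "s \<le> measure lebesgue W + \<delta>" if dpos: "\<delta> > 0" for \<delta>
    proof -
      obtain T where T: "open T" "W \<subseteq> T" "(T - W) \<in> lmeasurable" "emeasure lebesgue (T - W) < ennreal \<delta>"
        using sets_lebesgue_outer_open[of W \<delta>] W(1) dpos by (auto simp: fmeasurable_def)
      have TWW: "T = W \<union> (T - W)" using T(2) by auto
      have Tm: "T \<in> lmeasurable" using T(3) W(1) by (subst TWW) (rule fmeasurable.Un)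
      have "measure lebesgue (T - W) < \<delta>" using T(3,4)
        by (simp add: emeasure_eq_measure2 ennreal_less_iff)
      have "T \<inter> {a<..<b} \<in> \<U>" using T W Eab by (auto simp: \<U>_def)
      then have "s \<le> measure lebesgue (T \<inter> {a<..<b})"
        unfolding s_def by (intro cInf_lower bdd) auto
      also have "\<dots> \<le> measure lebesgue T" using Tm by (intro measure_mono_fmeasurable) auto
      also have "\<dots> \<le> measure lebesgue W + measure lebesgue (T - W)"
        using W(1) T(3) by (subst TWW) (intro measure_Un_le; simp add: fmeasurable_def)
      finally show ?thesis using \<open>measure lebesgue (T - W) < \<delta>\<close> by simp
    qed
    then have "s \<le> measure lebesgue W" by (rule field_le_epsilon)
    then have "q * s \<le> q * measure lebesgue W" using pq by simp
    also have "\<dots> \<le> p * measure lebesgue U" by (rule W(3))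
    also have "\<dots> \<le> p * (s + \<epsilon>)" using U(2) pq by simp
    finally show ?thesis .
  qed
  have "q * s \<le> p * s"
  proof (rule field_le_epsilon)
    fix e :: real assume "e > 0"
    then have "q * s \<le> p * (s + e/p)" using key[of "e/p"] pq by simp
    also have "p * (s + e/p) = p * s + e" using pq by (simp add: field_simps)
    finally show "q * s \<le> p * s + e" .
  qed
  then have "(q - p) * s \<le> 0" by (simp add: algebra_simps)
  then have s00: "s = 0" using s0 pq by (simp add: mult_le_0_iff)
  show ?thesis
  proof (subst negligible_outer, intro allI impI)
    fix e :: real assume "e > 0"
    obtain m where "m \<in> measure lebesgue ` \<U>" "m < s + e"
      using cInf_lessD[OF ne, of "s+e"] \<open>e>0\<close> by (auto simp: s_def)
    then obtain U where U: "U \<in> \<U>" "measure lebesgue U < e" using s00 by auto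
    then show "\<exists>T. E \<subseteq> T \<and> T \<in> lmeasurable \<and> measure lebesgue T < e"
      using Ulm by (auto simp: \<U>_def)
  qed
qed

lemma negl_A:
  fixes F :: "real \<Rightarrow> real" and p q :: real
  assumes mono: "\<And>x y. x \<le> y \<Longrightarrow> F x \<le> F y" and cont: "continuous_on UNIV F"
    and pq: "p < q"
  shows "negligible {x. frequently (\<lambda>h. (F (x+h) - F x)/h < p) (at_left 0)
                  \<and> frequently (\<lambda>h. (F (x+h) - F x)/h > q) (at_right 0)}" (is "negligible ?A")
proof (cases "p \<le> 0")
  case True
  have "?A = {}"
  proof (intro equalityI subsetI)
    fix x assume "x \<in> ?A"
    then have fr: "frequently (\<lambda>h. (F (x+h) - F x)/h < p) (at_left 0)" by auto
    have "eventually (\<lambda>h. h \<in> {-1<..<0}) (at_left (0::real))"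
      by (intro eventually_at_left_real) auto
    then have "eventually (\<lambda>h. \<not> (F (x+h) - F x)/h < p) (at_left (0::real))"
    proof (rule eventually_mono)
      fix h :: real assume "h \<in> {-1<..<0}"
      then have "F (x+h) - F x \<le> 0" using mono[of "x+h" x] by auto
      then have "(F (x+h) - F x)/h \<ge> 0" using \<open>h \<in> {-1<..<0}\<close> by (auto intro: divide_nonpos_neg)
      then show "\<not> (F (x+h) - F x)/h < p" using True by auto
    qed
    then show "x \<in> {}" using fr by (simp add: not_frequently[symmetric])
  qed auto
  then show ?thesis by (metis negligible_empty)
next
  case False
  then have p0: "0 < p" by simp
  have "?A = (\<Union>n\<in>(UNIV::nat set). ?A \<inter> {-real n<..<real n})"
  proof (intro equalityI subsetI)
    fix x assume "x \<in> ?A"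
    obtain n :: nat where "\<bar>x\<bar> < real n" using reals_Archimedean2 by blast
    then show "x \<in> (\<Union>n\<in>(UNIV::nat set). ?A \<inter> {-real n<..<real n})" using \<open>x \<in> ?A\<close> by (auto intro!: exI[of _ n])
  qed auto
  also have "negligible \<dots>"
  proof (rule negligible_countable_Union)
    show "countable (range (\<lambda>n::nat. ?A \<inter> {-real n<..<real n}))" by simp
    fix S assume "S \<in> range (\<lambda>n::nat. ?A \<inter> {-real n<..<real n})"
    then obtain n :: nat where S: "S = ?A \<inter> {-real n<..<real n}" by auto
    show "negligible S" unfolding S
      by (rule negl_local[OF mono cont p0 pq, of _ "-real n" "real n"]) auto
  qed
  finally show ?thesis .
qed

lemma negl_B:
  fixes F :: "real \<Rightarrow> real" and p q :: real
  assumes mono: "\<And>x y. x \<le> y \<Longrightarrow> F x \<le> F y" and cont: "continuous_on UNIV F"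
    and pq: "p < q"
  shows "negligible {x. frequently (\<lambda>h. (F (x+h) - F x)/h < p) (at_right 0)
                  \<and> frequently (\<lambda>h. (F (x+h) - F x)/h > q) (at_left 0)}" (is "negligible ?B")
proof -
  define G where "G = (\<lambda>x. - F (-x))"
  have monoG: "\<And>x y. x \<le> y \<Longrightarrow> G x \<le> G y" unfolding G_def using mono by auto
  have contG: "continuous_on UNIV G" unfolding G_def
    by (intro continuous_intros continuous_on_compose2[OF cont]) auto
  let ?A = "{x. frequently (\<lambda>h. (G (x+h) - G x)/h < p) (at_left 0)
                  \<and> frequently (\<lambda>h. (G (x+h) - G x)/h > q) (at_right 0)}"
  have nA: "negligible ?A" by (rule negl_A[OF monoG contG pq])
  have QG: "(G (y+h) - G y)/h = (F (-y + (-h)) - F (-y))/(-h)" for y h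
    unfolding G_def by (cases "h = 0") (auto simp: field_simps)
  have fl: "frequently P (at_left (0::real)) \<longleftrightarrow> frequently (\<lambda>h. P (-h)) (at_right 0)" for P
    by (simp add: at_left_minus frequently_filtermap)
  have fr: "frequently P (at_right (0::real)) \<longleftrightarrow> frequently (\<lambda>h. P (-h)) (at_left 0)" for P
    by (simp add: at_right_minus frequently_filtermap)
  have "?B \<subseteq> uminus ` ?A"
  proof
    fix x assume "x \<in> ?B"
    then have 1: "frequently (\<lambda>h. (F (x+h) - F x)/h < p) (at_right 0)"
       and 2: "frequently (\<lambda>h. (F (x+h) - F x)/h > q) (at_left 0)" by auto
    have "frequently (\<lambda>h. (G (-x+h) - G (-x))/h < p) (at_left 0)"
      unfolding QG fl using 1 by simp
    moreover have "frequently (\<lambda>h. (G (-x+h) - G (-x))/h > q) (at_right 0)"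
      unfolding QG fr using 2 by simp
    ultimately have "-x \<in> ?A" by simp
    then show "x \<in> uminus ` ?A" by (intro image_eqI[of _ _ "-x"]) auto
  qed
  moreover have "negligible (uminus ` ?A)"
    by (rule negligible_differentiable_image_negligible[OF _ nA]) (auto intro!: derivative_intros)
  ultimately show ?thesis by (rule negligible_subset[rotated])
qed

lemma freq_at0: "frequently P (at (0::real)) \<longleftrightarrow> frequently P (at_left 0) \<or> frequently P (at_right 0)"
  by (simp add: at_eq_sup_left_right frequently_def eventually_sup)

lemma freq_split:
  fixes Q :: "real \<Rightarrow> real" and p q :: real
  assumes pq: "p \<in> \<rat>" "q \<in> \<rat>" "p < q"
    and f1: "frequently (\<lambda>h. Q h < p) (at 0)" and f2: "frequently (\<lambda>h. Q h > q) (at 0)"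
  shows "\<exists>p' q'. p' \<in> \<rat> \<and> q' \<in> \<rat> \<and> p' < q' \<and>
     ((frequently (\<lambda>h. Q h < p') (at_left 0) \<and> frequently (\<lambda>h. Q h > q') (at_right 0)) \<or>
      (frequently (\<lambda>h. Q h < p') (at_right 0) \<and> frequently (\<lambda>h. Q h > q') (at_left 0)))"
proof -
  obtain m1 where m1: "m1 \<in> \<rat>" "p < m1" "m1 < q" using Rats_dense_in_real[OF pq(3)] by blast
  obtain m2 where m2: "m2 \<in> \<rat>" "m1 < m2" "m2 < q" using Rats_dense_in_real[OF m1(3)] by blast
  have d1: "frequently (\<lambda>h. Q h < p) (at_left 0) \<or> frequently (\<lambda>h. Q h < p) (at_right 0)"
    using f1 freq_at0 by blast
  have d2: "frequently (\<lambda>h. Q h > q) (at_left 0) \<or> frequently (\<lambda>h. Q h > q) (at_right 0)"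
    using f2 freq_at0 by blast
  show ?thesis
  proof (cases "frequently (\<lambda>h. Q h < p) (at_left 0)")
    case L1: True
    show ?thesis
    proof (cases "frequently (\<lambda>h. Q h > q) (at_right 0)")
      case True then show ?thesis using L1 pq by blast
    next
      case False
      then have L2: "frequently (\<lambda>h. Q h > q) (at_left 0)" using d2 by blast
      show ?thesis
      proof (cases "frequently (\<lambda>h. Q h > m1) (at_right 0)")
        case True then show ?thesis using L1 pq m1 by blast
      next
        case False
        then have "eventually (\<lambda>h. Q h < m2) (at_right (0::real))"
          using m2 by (auto simp: not_frequently elim: eventually_mono)
        then have "frequently (\<lambda>h. Q h < m2) (at_right (0::real))"
          by (intro eventually_frequently) auto
        then show ?thesis using L2 pq m2 by blast
      qed
    qed
  next
    case False
    then have R1: "frequently (\<lambda>h. Q h < p) (at_right 0)" using d1 by blast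
    show ?thesis
    proof (cases "frequently (\<lambda>h. Q h > q) (at_left 0)")
      case True then show ?thesis using R1 pq by blast
    next
      case False
      then have R2: "frequently (\<lambda>h. Q h > q) (at_right 0)" using d2 by blast
      show ?thesis
      proof (cases "frequently (\<lambda>h. Q h > m1) (at_left 0)")
        case True then show ?thesis using R1 pq m1 by blast
      next
        case False
        then have "eventually (\<lambda>h. Q h < m2) (at_left (0::real))"
          using m2 by (auto simp: not_frequently elim: eventually_mono)
        then have "frequently (\<lambda>h. Q h < m2) (at_left (0::real))"
          by (intro eventually_frequently) auto
        then show ?thesis using R2 pq m2 by blast
      qed
    qed
  qed
qed

lemma ae_diff:
  fixes F :: "real \<Rightarrow> real"
  assumes mono: "\<And>x y. x \<le> y \<Longrightarrow> F x \<le> F y" and lip: "\<And>x y. \<bar>F x - F y\<bar> \<le> \<bar>x - y\<bar>"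
  obtains N where "negligible N" "\<And>x. x \<notin> N \<Longrightarrow> \<exists>D. (F has_real_derivative D) (at x) \<and> 0 \<le> D \<and> D \<le> 1"
proof -
  have cont: "continuous_on UNIV F"
    by (rule lipschitz_on_continuous_on[where L=1], rule lipschitz_onI) (use lip in \<open>auto simp: dist_real_def\<close>)
  define A where "A = (\<lambda>(p::real,q::real). {x. frequently (\<lambda>h. (F (x+h) - F x)/h < p) (at_left 0)
                  \<and> frequently (\<lambda>h. (F (x+h) - F x)/h > q) (at_right 0)} \<union>
            {x. frequently (\<lambda>h. (F (x+h) - F x)/h < p) (at_right 0)
                  \<and> frequently (\<lambda>h. (F (x+h) - F x)/h > q) (at_left 0)})"
  define I where "I = {(p,q). p \<in> \<rat> \<and> q \<in> \<rat> \<and> p < (q::real)}"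
  define N where "N = \<Union>(A ` I)"
  have "negligible N"
    unfolding N_def
  proof (rule negligible_countable_Union)
    have "I \<subseteq> \<rat> \<times> \<rat>" by (auto simp: I_def)
    then have "countable I" using countable_rat by (blast intro: countable_subset countable_SIGMA)
    then show "countable (A ` I)" by simp
    fix S assume "S \<in> A ` I"
    then obtain p q where S: "S = A (p,q)" "p < q" by (auto simp: I_def)
    show "negligible S" unfolding S A_def
      using negl_A[OF mono cont S(2)] negl_B[OF mono cont S(2)] by auto
  qed
  moreover have "\<exists>D. (F has_real_derivative D) (at x) \<and> 0 \<le> D \<and> D \<le> 1" if xN: "x \<notin> N" for x
  proof -
    define Q where "Q = (\<lambda>h. (F (x+h) - F x)/h)"
    have bnd: "0 \<le> Q h \<and> Q h \<le> 1" if "h \<noteq> 0" for h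
    proof (cases "h > 0")
      case True
      have "0 \<le> F (x+h) - F x" "F (x+h) - F x \<le> h" using mono[of x "x+h"] lip[of "x+h" x] True by auto
      then show ?thesis using True by (auto simp: Q_def field_simps)
    next
      case False
      then have hn: "h < 0" using that by auto
      have "F (x+h) - F x \<le> 0" "h \<le> F (x+h) - F x" using mono[of "x+h" x] lip[of "x+h" x] hn by auto
      then show ?thesis using hn by (auto simp: Q_def field_simps)
    qed
    have ev: "eventually (\<lambda>h. 0 \<le> Q h \<and> Q h \<le> 1) (at (0::real))"
      unfolding eventually_at_filter using bnd by (auto intro: always_eventually)
    define f where "f = (\<lambda>h. ereal (Q h))"
    have l0: "ereal 0 \<le> Liminf (at 0) f"
      by (rule Liminf_bounded) (use ev in \<open>auto simp: f_def elim: eventually_mono\<close>)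
    have L1: "Limsup (at 0) f \<le> ereal 1"
      by (rule Limsup_bounded) (use ev in \<open>auto simp: f_def elim: eventually_mono\<close>)
    have lL: "Liminf (at (0::real)) f \<le> Limsup (at 0) f" by (rule Liminf_le_Limsup) auto
    obtain a where a: "Liminf (at 0) f = ereal a" using l0 lL L1
      by (cases "Liminf (at 0) f") auto
    obtain b where b: "Limsup (at 0) f = ereal b" using l0 lL L1
      by (cases "Limsup (at 0) f") auto
    have "a = b"
    proof (rule ccontr)
      assume "a \<noteq> b"
      then have ab: "a < b" using lL a b by auto
      obtain p where p: "p \<in> \<rat>" "a < p" "p < b" using Rats_dense_in_real[OF ab] by blast
      obtain q where q: "q \<in> \<rat>" "p < q" "q < b" using Rats_dense_in_real[OF p(3)] by blast
      have f1: "frequently (\<lambda>h. Q h < p) (at 0)"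
      proof (rule ccontr)
        assume "\<not> ?thesis"
        then have "eventually (\<lambda>h. ereal p \<le> f h) (at 0)"
          by (auto simp: not_frequently f_def elim: eventually_mono)
        then have "ereal p \<le> Liminf (at 0) f" by (rule Liminf_bounded)
        then show False using a p by auto
      qed
      have f2: "frequently (\<lambda>h. Q h > q) (at 0)"
      proof (rule ccontr)
        assume "\<not> ?thesis"
        then have "eventually (\<lambda>h. f h \<le> ereal q) (at 0)"
          by (auto simp: not_frequently f_def elim: eventually_mono)
        then have "Limsup (at 0) f \<le> ereal q" by (rule Limsup_bounded)
        then show False using b q by auto
      qed
      obtain p' q' where pq': "p' \<in> \<rat>" "q' \<in> \<rat>" "p' < q'"
        "(frequently (\<lambda>h. Q h < p') (at_left 0) \<and> frequently (\<lambda>h. Q h > q') (at_right 0)) \<or>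
         (frequently (\<lambda>h. Q h < p') (at_right 0) \<and> frequently (\<lambda>h. Q h > q') (at_left 0))"
        using freq_split[OF p(1) q(1) q(2) f1 f2] by blast
      then have "x \<in> A (p',q')" unfolding A_def Q_def by auto
      moreover have "(p',q') \<in> I" using pq' by (auto simp: I_def)
      ultimately show False using xN by (auto simp: N_def)
    qed
    then have "(f \<longlongrightarrow> ereal a) (at 0)" using a b by (intro Liminf_eq_Limsup) auto
    then have lim: "(Q \<longlongrightarrow> a) (at 0)" by (simp add: f_def)
    have "(F has_real_derivative a) (at x)" unfolding DERIV_def using lim by (simp add: Q_def)
    moreover have "0 \<le> a" "a \<le> 1" using l0 lL L1 a b \<open>a = b\<close> by auto
    ultimately show ?thesis by blast
  qed
  ultimately show ?thesis using that by blast
qed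

lemma avg_bound:
  fixes F :: "real \<Rightarrow> real"
  assumes mono: "\<And>x y. x \<le> y \<Longrightarrow> F x \<le> F y" and lip: "\<And>x y. \<bar>F x - F y\<bar> \<le> \<bar>x - y\<bar>"
    and cont: "continuous_on UNIV F" and h: "0 < h"
  shows "h * F t \<le> integral {t..t+h} F" "integral {t..t+h} F \<le> h * (F t + h)"
proof -
  have int: "F integrable_on {t..t+h}"
    by (rule integrable_continuous_interval) (use cont in \<open>auto intro: continuous_on_subset\<close>)
  have "integral {t..t+h} (\<lambda>x. F t) \<le> integral {t..t+h} F"
    by (rule integral_le[OF _ int]) (auto intro: mono)
  then show "h * F t \<le> integral {t..t+h} F" using h by simp
  have "integral {t..t+h} F \<le> integral {t..t+h} (\<lambda>x. F t + h)"
  proof (rule integral_le[OF int])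
    fix x assume x: "x \<in> {t..t+h}"
    then show "F x \<le> F t + h" using lip[of x t] by auto
  qed auto
  then show "integral {t..t+h} F \<le> h * (F t + h)" using h by simp
qed

lemma ftc_lip:
  fixes F :: "real \<Rightarrow> real" and N :: "real set" and a b :: real
  assumes mono: "\<And>x y. x \<le> y \<Longrightarrow> F x \<le> F y" and lip: "\<And>x y. \<bar>F x - F y\<bar> \<le> \<bar>x - y\<bar>"
    and N: "negligible N" and hN: "\<And>x. x \<notin> N \<Longrightarrow> (F has_real_derivative deriv F x) (at x)"
    and ab: "a \<le> b"
  shows "(deriv F has_integral (F b - F a)) {a..b}"
proof -
  have cont: "continuous_on UNIV F"
    by (rule lipschitz_on_continuous_on[where L=1], rule lipschitz_onI) (use lip in \<open>auto simp: dist_real_def\<close>)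
  define hh where "hh = (\<lambda>n::nat. inverse (real (Suc n)))"
  have hpos: "0 < hh n" "hh n \<le> 1" for n by (auto simp: hh_def field_simps)
  define g where "g = (\<lambda>n t. (F (t + hh n) - F t) / hh n)"
  define \<Phi> where "\<Phi> = (\<lambda>t. integral {a-1..t} F)"
  have dPhi: "(\<Phi> has_real_derivative F t) (at t)" if "t \<in> {a-1<..<b+2}" for t
  proof -
    have "(\<Phi> has_real_derivative F t) (at t within {a-1..b+2})"
      unfolding \<Phi>_def using that
      by (intro integral_has_real_derivative) (auto intro: continuous_on_subset[OF cont])
    moreover have "at t within {a-1..b+2} = at t"
      by (rule at_within_interior) (use that in auto)
    ultimately show ?thesis by simp
  qed
  have gint: "(g n has_integral ((\<Phi> (b + hh n) - \<Phi> b) / hh n - (\<Phi> (a + hh n) - \<Phi> a) / hh n)) {a..b}" for n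
  proof -
    have "(g n has_integral
          ((\<lambda>t. (\<Phi> (t + hh n) - \<Phi> t) / hh n) b - (\<lambda>t. (\<Phi> (t + hh n) - \<Phi> t) / hh n) a)) {a..b}"
    proof (rule fundamental_theorem_of_calculus[OF ab])
      fix t assume t: "t \<in> {a..b}"
      have d1: "((\<lambda>t. \<Phi> (t + hh n)) has_real_derivative F (t + hh n)) (at t)"
        using dPhi[of "t + hh n"] t hpos[of n] by (simp add: DERIV_shift)
      have d2: "(\<Phi> has_real_derivative F t) (at t)" using dPhi[of t] t by simp
      have "((\<lambda>t. (\<Phi> (t + hh n) - \<Phi> t) / hh n) has_real_derivative g n t) (at t)"
        unfolding g_def using DERIV_cdivide[OF DERIV_diff[OF d1 d2], of "hh n"] by simp
      then show "((\<lambda>t. (\<Phi> (t + hh n) - \<Phi> t) / hh n) has_vector_derivative g n t) (at t within {a..b})"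
        by (simp add: has_real_derivative_iff_has_vector_derivative has_vector_derivative_at_within)
    qed
    then show ?thesis by simp
  qed
  have PhiI: "\<Phi> (t + h) - \<Phi> t = integral {t..t+h} F" if "t \<in> {a..b}" "0 < h" "h \<le> 1" for t h
  proof -
    have "integral {a-1..t} F + integral {t..t+h} F = integral {a-1..t+h} F"
    proof (rule Henstock_Kurzweil_Integration.integral_combine)
      show "a - 1 \<le> t" "t \<le> t + h" using that by auto
      show "F integrable_on {a - 1..t + h}"
        by (rule integrable_continuous_interval) (use cont in \<open>auto intro: continuous_on_subset\<close>)
    qed
    then show ?thesis unfolding \<Phi>_def by simp
  qed
  have close: "\<bar>(\<Phi> (t + hh n) - \<Phi> t) / hh n - F t\<bar> \<le> hh n" if "t \<in> {a..b}" for t n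
  proof -
    have 1: "hh n * F t \<le> integral {t..t+hh n} F" "integral {t..t+hh n} F \<le> hh n * (F t + hh n)"
      using avg_bound[OF mono lip cont hpos(1)] by auto
    have "(\<Phi> (t + hh n) - \<Phi> t) / hh n = integral {t..t+hh n} F / hh n"
      using PhiI[OF that hpos] by simp
    moreover have "F t \<le> integral {t..t+hh n} F / hh n" "integral {t..t+hh n} F / hh n \<le> F t + hh n"
      using 1 hpos[of n] by (auto simp: field_simps)
    ultimately show ?thesis by auto
  qed
  have hh0: "hh \<longlonglongrightarrow> 0" unfolding hh_def by (rule LIMSEQ_inverse_real_of_nat)
  have conv1: "(\<lambda>n. integral {a..b} (g n)) \<longlonglongrightarrow> F b - F a"
  proof -
    have eq: "integral {a..b} (g n) = F b - F a + (((\<Phi> (b + hh n) - \<Phi> b) / hh n - F b) - ((\<Phi> (a + hh n) - \<Phi> a) / hh n - F a))" for n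
      using integral_unique[OF gint[of n]] by simp
    have "(\<lambda>n. ((\<Phi> (b + hh n) - \<Phi> b) / hh n - F b)) \<longlonglongrightarrow> 0"
      by (rule Lim_null_comparison[OF _ hh0]) (use close[of b] ab in auto)
    moreover have "(\<lambda>n. ((\<Phi> (a + hh n) - \<Phi> a) / hh n - F a)) \<longlonglongrightarrow> 0"
      by (rule Lim_null_comparison[OF _ hh0]) (use close[of a] ab in auto)
    ultimately have "(\<lambda>n. F b - F a + (((\<Phi> (b + hh n) - \<Phi> b) / hh n - F b) - ((\<Phi> (a + hh n) - \<Phi> a) / hh n - F a))) \<longlonglongrightarrow> F b - F a + (0 - 0)"
      by (intro tendsto_intros)
    then show ?thesis unfolding eq by simp
  qed
  define S where "S = {a..b} - N"
  have negS: "negligible {x \<in> {a..b} - S. f x \<noteq> 0}" "negligible {x \<in> S - {a..b}. f x \<noteq> 0}" for f :: "real \<Rightarrow> real"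
    using N by (auto simp: S_def intro: negligible_subset[OF N])
  have gintS: "g n integrable_on S" for n
    using integrable_spike_set[OF has_integral_integrable[OF gint[of n]] negS(1) negS(2)] .
  have oneS: "(\<lambda>x. 1::real) integrable_on S"
    using integrable_spike_set[OF integrable_const_ivl[of 1 a b] negS(1) negS(2)] by simp
  have gle: "norm (g n x) \<le> 1" for n x
  proof -
    have "\<bar>F (x + hh n) - F x\<bar> \<le> hh n" using lip[of "x + hh n" x] hpos[of n] by auto
    then show ?thesis using hpos[of n] by (auto simp: g_def abs_divide divide_le_eq)
  qed
  have gconv: "(\<lambda>n. g n x) \<longlonglongrightarrow> deriv F x" if "x \<in> S" for x
  proof -
    have "((\<lambda>h. (F (x + h) - F x) / h) \<longlongrightarrow> deriv F x) (at 0)"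
      using hN[of x] that by (auto simp: S_def DERIV_def)
    note lim = this
    have fr: "filterlim hh (at_right 0) sequentially"
      by (rule tendsto_imp_filterlim_at_right[OF hh0]) (use hpos in auto)
    have fa: "filterlim hh (at 0) sequentially"
      by (rule filterlim_mono[OF fr at_within_le_at order_refl])
    show ?thesis unfolding g_def by (rule filterlim_compose[OF lim fa])
  qed
  have dc: "deriv F integrable_on S" "(\<lambda>n. integral S (g n)) \<longlonglongrightarrow> integral S (deriv F)"
    using dominated_convergence[OF gintS oneS _ gconv] gle by auto
  have "integral S (g n) = integral {a..b} (g n)" for n
    by (rule integral_spike_set) (use negS in auto)
  then have "(\<lambda>n. integral {a..b} (g n)) \<longlonglongrightarrow> integral S (deriv F)" using dc(2) by simp
  then have "integral S (deriv F) = F b - F a" using conv1 LIMSEQ_unique by blast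
  then have "(deriv F has_integral (F b - F a)) S" using dc(1) by (metis integrable_integral)
  then show ?thesis
    using has_integral_spike_set_eq[OF negS(2) negS(1)] by blast
qed

lemma deriv_cong_open:
  fixes f g :: "real \<Rightarrow> real"
  assumes "open S" "t \<in> S" "\<And>x. x \<in> S \<Longrightarrow> f x = g x"
  shows "deriv f t = deriv g t"
proof -
  have "(f has_field_derivative D) (at t) \<longleftrightarrow> (g has_field_derivative D) (at t)" for D
    using has_field_derivative_transform_within_open[OF _ assms(1,2), of f D g]
          has_field_derivative_transform_within_open[OF _ assms(1,2), of g D f] assms(3) by auto
  then show ?thesis unfolding deriv_def by simp
qed

lemma slice_data:
  fixes f :: "real \<Rightarrow> real"
  assumes sl: "\<And>x y. x \<in> {0..1} \<Longrightarrow> y \<in> {0..1} \<Longrightarrow> x \<le> y \<Longrightarrow> f x \<le> f y \<and> f y - f x \<le> y - x"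
  obtains N where "negligible N" "\<And>t. t \<in> {0..1} - N \<Longrightarrow> 0 \<le> deriv f t \<and> deriv f t \<le> 1"
    "\<And>y. y \<in> {0..1} \<Longrightarrow> (deriv f has_integral (f y - f 0)) {0..y}"
proof -
  define cl where "cl = (\<lambda>x::real. max 0 (min 1 x))"
  define F where "F = (\<lambda>x. f (cl x))"
  have cl01: "cl x \<in> {0..1}" for x by (auto simp: cl_def)
  have clmono: "x \<le> y \<Longrightarrow> cl x \<le> cl y" for x y by (auto simp: cl_def)
  have cllip: "x \<le> y \<Longrightarrow> cl y - cl x \<le> y - x" for x y by (auto simp: cl_def)
  have mono: "\<And>x y. x \<le> y \<Longrightarrow> F x \<le> F y"
    unfolding F_def using sl cl01 clmono by blast
  have lip: "\<bar>F x - F y\<bar> \<le> \<bar>x - y\<bar>" for x y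
  proof (cases "x \<le> y")
    case True
    then have "F x \<le> F y" "F y - F x \<le> cl y - cl x" unfolding F_def using sl cl01 clmono by blast+
    then show ?thesis using cllip[OF True] True by auto
  next
    case False
    then have "F y \<le> F x" "F x - F y \<le> cl x - cl y" unfolding F_def using sl cl01 clmono False by (meson linear)+
    then show ?thesis using cllip[of y x] False by auto
  qed
  obtain N0 where N0: "negligible N0" "\<And>x. x \<notin> N0 \<Longrightarrow> \<exists>D. (F has_real_derivative D) (at x) \<and> 0 \<le> D \<and> D \<le> 1"
    using ae_diff[OF mono lip] by blast
  have hN: "(F has_real_derivative deriv F x) (at x)" if "x \<notin> N0" for x
    using N0(2)[OF that] DERIV_imp_deriv by metis
  have dF: "0 \<le> deriv F x \<and> deriv F x \<le> 1" if "x \<notin> N0" for x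
    using N0(2)[OF that] DERIV_imp_deriv by metis
  have eqd: "deriv f t = deriv F t" if "t \<in> {0<..<1}" for t
    by (rule deriv_cong_open[of "{0<..<1}"]) (use that in \<open>auto simp: F_def cl_def\<close>)
  define N where "N = N0 \<union> {0,1}"
  show ?thesis
  proof
    show "negligible N" using N0(1) by (auto simp: N_def)
    show "0 \<le> deriv f t \<and> deriv f t \<le> 1" if "t \<in> {0..1} - N" for t
      using that dF[of t] eqd[of t] by (auto simp: N_def)
    show "(deriv f has_integral (f y - f 0)) {0..y}" if y: "y \<in> {0..1}" for y
    proof -
      have "(deriv F has_integral (F y - F 0)) {0..y}"
        using ftc_lip[OF mono lip N0(1) hN] y by auto
      moreover have "F y = f y" "F 0 = f 0" using y by (auto simp: F_def cl_def)
      ultimately have I: "(deriv F has_integral (f y - f 0)) {0..y}" by simp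
      have ng: "negligible {0::real,1}" by simp
      show ?thesis
        by (rule has_integral_spike[OF ng _ I]) (use eqd y in auto)
    qed
  qed
qed

lemma copula_slices:
  fixes C :: "real \<Rightarrow> real \<Rightarrow> real" and u :: real
  assumes C: "copula2 C" and u: "u \<in> {0..1}"
  shows "\<And>x y. x \<in> {0..1} \<Longrightarrow> y \<in> {0..1} \<Longrightarrow> x \<le> y \<Longrightarrow> C u x \<le> C u y \<and> C u y - C u x \<le> y - x"
    and "\<And>x y. x \<in> {0..1} \<Longrightarrow> y \<in> {0..1} \<Longrightarrow> x \<le> y \<Longrightarrow> C x u \<le> C y u \<and> C y u - C x u \<le> y - x"
proof -
  have m: "\<And>u. u \<in> {0..1} \<Longrightarrow> C u 0 = 0 \<and> C 0 u = 0 \<and> C u 1 = u \<and> C 1 u = u"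
    and inc: "\<And>u1 u2 v1 v2. u1 \<in> {0..1} \<Longrightarrow> u2 \<in> {0..1} \<Longrightarrow> v1 \<in> {0..1} \<Longrightarrow> v2 \<in> {0..1} \<Longrightarrow>
        u1 \<le> u2 \<Longrightarrow> v1 \<le> v2 \<Longrightarrow> C u2 v2 - C u2 v1 - C u1 v2 + C u1 v1 \<ge> 0"
    using C unfolding copula2_def by blast+
  fix x y :: real assume xy: "x \<in> {0..1}" "y \<in> {0..1}" "x \<le> y"
  have "C u y - C u x - C 0 y + C 0 x \<ge> 0" using inc[of 0 u x y] xy u by auto
  moreover have "C 1 y - C 1 x - C u y + C u x \<ge> 0" using inc[of u 1 x y] xy u by auto
  ultimately show "C u x \<le> C u y \<and> C u y - C u x \<le> y - x" using m[of x] m[of y] xy by auto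
next
  have m: "\<And>u. u \<in> {0..1} \<Longrightarrow> C u 0 = 0 \<and> C 0 u = 0 \<and> C u 1 = u \<and> C 1 u = u"
    and inc: "\<And>u1 u2 v1 v2. u1 \<in> {0..1} \<Longrightarrow> u2 \<in> {0..1} \<Longrightarrow> v1 \<in> {0..1} \<Longrightarrow> v2 \<in> {0..1} \<Longrightarrow>
        u1 \<le> u2 \<Longrightarrow> v1 \<le> v2 \<Longrightarrow> C u2 v2 - C u2 v1 - C u1 v2 + C u1 v1 \<ge> 0"
    using C unfolding copula2_def by blast+
  fix x y :: real assume xy: "x \<in> {0..1}" "y \<in> {0..1}" "x \<le> y"
  have "C y u - C y 0 - C x u + C x 0 \<ge> 0" using inc[of x y 0 u] xy u by auto
  moreover have "C y 1 - C y u - C x 1 + C x u \<ge> 0" using inc[of x y u 1] xy u by auto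
  ultimately show "C x u \<le> C y u \<and> C y u - C x u \<le> y - x" using m[of x] m[of y] xy by auto
qed

lemma pair_lemma:
  fixes a b :: "real \<Rightarrow> real" and N :: "real set" and IA IB :: "real \<Rightarrow> real" and y :: real
  assumes N: "negligible N"
    and ab: "\<And>t. t \<in> {0..1} - N \<Longrightarrow> 0 \<le> a t \<and> a t \<le> 1 \<and> 0 \<le> b t \<and> b t \<le> 1"
    and ia: "\<And>z. z \<in> {0..1} \<Longrightarrow> (a has_integral IA z) {0..z}"
    and ib: "\<And>z. z \<in> {0..1} \<Longrightarrow> (b has_integral IB z) {0..z}"
    and y: "y \<in> {0..1}"
  shows "IA y + IB y - y \<le> integral {0..y} (\<lambda>t. W2 (a t) (b t))"
    "0 \<le> integral {0..y} (\<lambda>t. W2 (a t) (b t))"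
    "integral {0..y} (\<lambda>t. M2 (a t) (b t)) \<le> IA y"
    "integral {0..y} (\<lambda>t. M2 (a t) (b t)) \<le> IB y"
    "(IA 1 - IA y) + (IB 1 - IB y) - (1 - y) \<le> integral {0..1} (\<lambda>t. W2 (a t) (b t)) - integral {0..y} (\<lambda>t. W2 (a t) (b t))"
proof -
  define w where "w = (\<lambda>t. W2 (a t) (b t))"
  define m where "m = (\<lambda>t. M2 (a t) (b t))"
  have integ: "w integrable_on {0..z} \<and> m integrable_on {0..z}" if z: "z \<in> {0..1}" for z
  proof -
    define S where "S = {0..z} - N"
    have negS: "negligible {x \<in> {0..z} - S. f x \<noteq> 0}" "negligible {x \<in> S - {0..z}. f x \<noteq> 0}" for f :: "real \<Rightarrow> real"
      using N by (auto simp: S_def intro: negligible_subset[OF N])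
    have Sm: "S \<in> lmeasurable" unfolding S_def
      using N by (intro fmeasurable_Diff) (auto simp: negligible_imp_sets)
    have aS: "a absolutely_integrable_on S"
      by (rule nonnegative_absolutely_integrable_1[OF integrable_spike_set[OF has_integral_integrable[OF ia[OF z]] negS]])
         (use ab z in \<open>auto simp: S_def\<close>)
    have bS: "b absolutely_integrable_on S"
      by (rule nonnegative_absolutely_integrable_1[OF integrable_spike_set[OF has_integral_integrable[OF ib[OF z]] negS]])
         (use ab z in \<open>auto simp: S_def\<close>)
    have cS: "(\<lambda>t. c) absolutely_integrable_on S" for c :: real using Sm by simp
    have "(\<lambda>t. a t + b t) absolutely_integrable_on S" using aS bS by (rule set_integral_add)
    then have "(\<lambda>t. a t + b t - 1) absolutely_integrable_on S" using cS[of 1] by (rule set_integral_diff)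
    then have "(\<lambda>t. max (a t + b t - 1) 0) absolutely_integrable_on S"
      using cS[of 0] by (rule absolutely_integrable_max_1)
    then have wS: "w integrable_on S" unfolding w_def W2_def by (rule set_lebesgue_integral_eq_integral(1))
    have "(\<lambda>t. min (a t) (b t)) absolutely_integrable_on S" using aS bS by (rule absolutely_integrable_min_1)
    then have mS: "m integrable_on S" unfolding m_def M2_def by (rule set_lebesgue_integral_eq_integral(1))
    show ?thesis using integrable_spike_set[OF wS negS(2) negS(1)] integrable_spike_set[OF mS negS(2) negS(1)] by blast
  qed
  have y01: "0 \<le> y" "y \<le> 1" using y by auto
  have wy: "w integrable_on {0..y}" "m integrable_on {0..y}" using integ[OF y] by auto
  have abp: "((\<lambda>t. a t + b t - 1) has_integral (IA y + IB y - y)) {0..y}"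
  proof -
    have "((\<lambda>t. a t + b t) has_integral (IA y + IB y)) {0..y}" by (intro has_integral_add ia ib y)
    moreover have "((\<lambda>t. 1::real) has_integral y) {0..y}" using has_integral_const_real[of "1::real" 0 y] y01 by simp
    ultimately show ?thesis by (rule has_integral_diff)
  qed
  show "IA y + IB y - y \<le> integral {0..y} (\<lambda>t. W2 (a t) (b t))"
  proof -
    have "integral {0..y} (\<lambda>t. a t + b t - 1) \<le> integral {0..y} w"
      by (rule integral_le[OF has_integral_integrable[OF abp] wy(1)]) (auto simp: w_def W2_def)
    then show ?thesis using integral_unique[OF abp] by (simp add: w_def)
  qed
  show "0 \<le> integral {0..y} (\<lambda>t. W2 (a t) (b t))"
    using integral_nonneg[OF wy(1)] by (auto simp: w_def W2_def)
  show "integral {0..y} (\<lambda>t. M2 (a t) (b t)) \<le> IA y"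
    using integral_le[OF wy(2) has_integral_integrable[OF ia[OF y]]] integral_unique[OF ia[OF y]]
    by (auto simp: m_def M2_def)
  show "integral {0..y} (\<lambda>t. M2 (a t) (b t)) \<le> IB y"
    using integral_le[OF wy(2) has_integral_integrable[OF ib[OF y]]] integral_unique[OF ib[OF y]]
    by (auto simp: m_def M2_def)
  have one: "(1::real) \<in> {0..1}" by simp
  have w1: "w integrable_on {0..1}" using integ[OF one] by auto
  have comb: "integral {0..y} f + integral {y..1} f = integral {0..1} f" if "f integrable_on {0..1}" for f :: "real \<Rightarrow> real"
    using Henstock_Kurzweil_Integration.integral_combine[OF y01 that] .
  have a1: "a integrable_on {0..1}" "b integrable_on {0..1}" using ia[OF one] ib[OF one] by auto
  have ay1: "integral {y..1} a = IA 1 - IA y"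
    using comb[OF a1(1)] integral_unique[OF ia[OF y]] integral_unique[OF ia[OF one]] by linarith
  have ay2: "integral {y..1} b = IB 1 - IB y"
    using comb[OF a1(2)] integral_unique[OF ib[OF y]] integral_unique[OF ib[OF one]] by linarith
  have ai: "a integrable_on {y..1}" "b integrable_on {y..1}" "w integrable_on {y..1}"
    using a1 w1 y01 by (auto intro: integrable_subinterval_real)
  have ha: "(a has_integral (IA 1 - IA y)) {y..1}" using integrable_integral[OF ai(1)] ay1 by simp
  have hb: "(b has_integral (IB 1 - IB y)) {y..1}" using integrable_integral[OF ai(2)] ay2 by simp
  have X: "((\<lambda>t. a t + b t - 1) has_integral ((IA 1 - IA y) + (IB 1 - IB y) - (1 - y))) {y..1}"
  proof -
    have "((\<lambda>t. a t + b t) has_integral ((IA 1 - IA y) + (IB 1 - IB y))) {y..1}"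
      by (rule has_integral_add[OF ha hb])
    moreover have "((\<lambda>t. 1::real) has_integral (1 - y)) {y..1}" using has_integral_const_real[of "1::real" y 1] y01 by simp
    ultimately show ?thesis by (rule has_integral_diff)
  qed
  have "integral {y..1} (\<lambda>t. a t + b t - 1) \<le> integral {y..1} w"
    by (rule integral_le[OF has_integral_integrable[OF X] ai(3)]) (auto simp: w_def W2_def)
  then have "(IA 1 - IA y) + (IB 1 - IB y) - (1 - y) \<le> integral {y..1} w"
    using integral_unique[OF X] by simp
  then show "(IA 1 - IA y) + (IB 1 - IB y) - (1 - y) \<le> integral {0..1} (\<lambda>t. W2 (a t) (b t)) - integral {0..y} (\<lambda>t. W2 (a t) (b t))"
    using comb[OF w1] by (simp add: w_def)
qed

lemma triple:
  fixes fa fb :: "real \<Rightarrow> real" and y :: real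
  assumes sa: "\<And>x y. x \<in> {0..1} \<Longrightarrow> y \<in> {0..1} \<Longrightarrow> x \<le> y \<Longrightarrow> fa x \<le> fa y \<and> fa y - fa x \<le> y - x"
    and sb: "\<And>x y. x \<in> {0..1} \<Longrightarrow> y \<in> {0..1} \<Longrightarrow> x \<le> y \<Longrightarrow> fb x \<le> fb y \<and> fb y - fb x \<le> y - x"
    and y: "y \<in> {0..1}"
  shows "(fa y - fa 0) + (fb y - fb 0) - y \<le> integral {0..y} (\<lambda>t. W2 (deriv fa t) (deriv fb t))"
    "0 \<le> integral {0..y} (\<lambda>t. W2 (deriv fa t) (deriv fb t))"
    "integral {0..y} (\<lambda>t. M2 (deriv fa t) (deriv fb t)) \<le> fa y - fa 0"
    "integral {0..y} (\<lambda>t. M2 (deriv fa t) (deriv fb t)) \<le> fb y - fb 0"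
    "((fa 1 - fa 0) - (fa y - fa 0)) + ((fb 1 - fb 0) - (fb y - fb 0)) - (1 - y) \<le> integral {0..1} (\<lambda>t. W2 (deriv fa t) (deriv fb t)) - integral {0..y} (\<lambda>t. W2 (deriv fa t) (deriv fb t))"
proof -
  obtain Na where Na: "negligible Na" "\<And>t. t \<in> {0..1} - Na \<Longrightarrow> 0 \<le> deriv fa t \<and> deriv fa t \<le> 1"
    "\<And>y. y \<in> {0..1} \<Longrightarrow> (deriv fa has_integral (fa y - fa 0)) {0..y}"
    using slice_data[OF sa] by blast
  obtain Nb where Nb: "negligible Nb" "\<And>t. t \<in> {0..1} - Nb \<Longrightarrow> 0 \<le> deriv fb t \<and> deriv fb t \<le> 1"
    "\<And>y. y \<in> {0..1} \<Longrightarrow> (deriv fb has_integral (fb y - fb 0)) {0..y}"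
    using slice_data[OF sb] by blast
  have N: "negligible (Na \<union> Nb)" using Na(1) Nb(1) by simp
  have ab: "\<And>t. t \<in> {0..1} - (Na \<union> Nb) \<Longrightarrow> 0 \<le> deriv fa t \<and> deriv fa t \<le> 1 \<and> 0 \<le> deriv fb t \<and> deriv fb t \<le> 1"
    using Na(2) Nb(2) by blast
  note P = pair_lemma[OF N ab Na(3) Nb(3) y]
  show "(fa y - fa 0) + (fb y - fb 0) - y \<le> integral {0..y} (\<lambda>t. W2 (deriv fa t) (deriv fb t))"
    "0 \<le> integral {0..y} (\<lambda>t. W2 (deriv fa t) (deriv fb t))"
    "integral {0..y} (\<lambda>t. M2 (deriv fa t) (deriv fb t)) \<le> fa y - fa 0"
    "integral {0..y} (\<lambda>t. M2 (deriv fa t) (deriv fb t)) \<le> fb y - fb 0"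
    "((fa 1 - fa 0) - (fa y - fa 0)) + ((fb 1 - fb 0) - (fb y - fb 0)) - (1 - y) \<le> integral {0..1} (\<lambda>t. W2 (deriv fa t) (deriv fb t)) - integral {0..y} (\<lambda>t. W2 (deriv fa t) (deriv fb t))"
    using P by auto
qed

theorem proposition5p1:
  fixes C12 C13 C23 :: "real \<Rightarrow> real \<Rightarrow> real" and u1 u2 u3 :: real
  assumes "copula2 C12" and "copula2 C13" and "copula2 C23"
    and "compatible C12 C13 C23"
    and "u1 \<in> {0..1}" and "u2 \<in> {0..1}" and "u3 \<in> {0..1}"
  shows "CL C12 C13 C23 u1 u2 u3 \<ge> FL C12 C13 C23 u1 u2 u3
       \<and> CU C12 C13 C23 u1 u2 u3 \<le> FU C12 C13 C23 u1 u2 u3"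
proof -
  note c12 = assms(1) and c13 = assms(2) and c23 = assms(3) and u = assms(5-7)
  have m12: "\<And>u. u \<in> {0..1} \<Longrightarrow> C12 u 0 = 0 \<and> C12 0 u = 0 \<and> C12 u 1 = u \<and> C12 1 u = u"
    using c12 unfolding copula2_def by blast
  have m13: "\<And>u. u \<in> {0..1} \<Longrightarrow> C13 u 0 = 0 \<and> C13 0 u = 0 \<and> C13 u 1 = u \<and> C13 1 u = u"
    using c13 unfolding copula2_def by blast
  have m23: "\<And>u. u \<in> {0..1} \<Longrightarrow> C23 u 0 = 0 \<and> C23 0 u = 0 \<and> C23 u 1 = u \<and> C23 1 u = u"
    using c23 unfolding copula2_def by blast
  have s23: "\<And>x y. x \<in> {0..1} \<Longrightarrow> y \<in> {0..1} \<Longrightarrow> x \<le> y \<Longrightarrow> transp2 C23 x u2 \<le> transp2 C23 y u2 \<and> transp2 C23 y u2 - transp2 C23 x u2 \<le> y - x"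
    using copula_slices(1)[OF c23 u(2)] by (simp add: transp2_def)
  have s12: "\<And>x y. x \<in> {0..1} \<Longrightarrow> y \<in> {0..1} \<Longrightarrow> x \<le> y \<Longrightarrow> transp2 C12 u2 x \<le> transp2 C12 u2 y \<and> transp2 C12 u2 y - transp2 C12 u2 x \<le> y - x"
    using copula_slices(2)[OF c12 u(2)] by (simp add: transp2_def)
  note T1 = triple[where fa="\<lambda>s. C12 u1 s" and fb="\<lambda>s. C23 s u3" and y=u2,
      OF copula_slices(1)[OF c12 u(1)] copula_slices(2)[OF c23 u(3)] u(2)]
  note T2 = triple[where fa="\<lambda>s. C13 u1 s" and fb="\<lambda>s. transp2 C23 s u2" and y=u3,
      OF copula_slices(1)[OF c13 u(1)] s23 u(3)]
  note T3 = triple[where fa="\<lambda>s. transp2 C12 u2 s" and fb="\<lambda>s. C13 s u3" and y=u1,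
      OF s12 copula_slices(2)[OF c13 u(3)] u(1)]
  have a1: "C12 u1 u2 + C23 u2 u3 - u2 \<le> star3 W2 C12 C23 u1 u2 u3"
    using T1(1) m12[OF u(1)] m23[OF u(3)] by (simp add: star3_def)
  have a2: "0 \<le> star3 W2 C12 C23 u1 u2 u3"
    using T1(2) by (simp add: star3_def)
  have a3: "star3 M2 C12 C23 u1 u2 u3 \<le> C12 u1 u2" "star3 M2 C12 C23 u1 u2 u3 \<le> C23 u2 u3"
    using T1(3,4) m12[OF u(1)] m23[OF u(3)] by (simp_all add: star3_def)
  have a4: "star3 W2 C12 C23 u1 u2 u3 + C13 u1 u3 - ast2 W2 C12 C23 u1 u3
      \<le> 1 - u1 - u2 - u3 + C12 u1 u2 + C13 u1 u3 + C23 u2 u3"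
    using T1(5) m12[OF u(1)] m23[OF u(3)] by (simp add: star3_def ast2_def)
  have b1: "C13 u1 u3 + C23 u2 u3 - u3 \<le> star3 W2 C13 (transp2 C23) u1 u3 u2"
    using T2(1) m13[OF u(1)] m23[OF u(2)] by (simp add: star3_def transp2_def)
  have b3: "star3 M2 C13 (transp2 C23) u1 u3 u2 \<le> C13 u1 u3"
    using T2(3) m13[OF u(1)] by (simp add: star3_def)
  have c1: "C12 u1 u2 + C13 u1 u3 - u1 \<le> star3 W2 (transp2 C12) C13 u2 u1 u3"
    using T3(1) m12[OF u(2)] m13[OF u(3)] by (simp add: star3_def transp2_def)
  let ?CL = "CL C12 C13 C23 u1 u2 u3" and ?CU = "CU C12 C13 C23 u1 u2 u3"
  have l1: "star3 W2 C12 C23 u1 u2 u3 \<le> ?CL"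
    unfolding CL_def termL_def by (meson max.cobounded1 order_trans)
  have l2: "star3 W2 C13 (transp2 C23) u1 u3 u2 \<le> ?CL"
    unfolding CL_def termL_def by (meson max.cobounded1 max.cobounded2 order_trans)
  have l3: "star3 W2 (transp2 C12) C13 u2 u1 u3 \<le> ?CL"
    unfolding CL_def termL_def by (meson max.cobounded1 max.cobounded2 order_trans)
  have g1: "?CU \<le> star3 M2 C12 C23 u1 u2 u3"
    unfolding CU_def termU_def by (meson min.cobounded1 order_trans)
  have g2: "?CU \<le> star3 W2 C12 C23 u1 u2 u3 + C13 u1 u3 - ast2 W2 C12 C23 u1 u3"
    unfolding CU_def termU_def by (meson min.cobounded1 min.cobounded2 order_trans)
  have g3: "?CU \<le> star3 M2 C13 (transp2 C23) u1 u3 u2"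
    unfolding CU_def termU_def by (meson min.cobounded1 min.cobounded2 order_trans)
  have "FL C12 C13 C23 u1 u2 u3 \<le> ?CL"
    unfolding FL_def by (intro max.boundedI) (use a2 l1 a1 c1 l3 b1 l2 in linarith)+
  moreover have "?CU \<le> FU C12 C13 C23 u1 u2 u3"
    unfolding FU_def by (intro min.boundedI) (use g1 a3 g3 b3 g2 a4 in linarith)+
  ultimately show ?thesis by simp
qed

end
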